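(* Let $\tilde W$ be the affine Coxeter group of type $\tilde G_2$ (Coxeter generators $r_1,r_2,r_3$ with $(r_1r_2)^6=1$, $(r_2r_3)^3=1$, $(r_1r_3)^2=1$), and let $X$ be a conjugacy class of involutions of $\tilde W$. Then the commuting involution graph $\mathcal{C}(\tilde W,X)$ is disconnected.
   Context: For a group $G$ and a set $X$ of involutions of $G$, the commuting involution graph $\mathcal{C}(G,X)$ has vertex set $X$, with distinct $x,y\in X$ joined by an edge whenever $xy=yx$. *)

theory Defs
  imports "HOL-Algebra.Group"
begin

text \<open>Affine Coxeter group of type G2~, given by its Coxeter presentation:
 generators r1 r2 r3 (encoded as 1 2 3), relations r_i^2 = 1,
 (r1 r2)^6 = 1, (r2 r3)^3 = 1, (r1 r3)^2 = 1.  Elements are classes of words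
 modulo the congruence generated by the relations.\<close>

definition G2_gens :: "nat set" where
  "G2_gens = {1, 2, 3}"

fun G2_m :: "nat \<Rightarrow> nat \<Rightarrow> nat" where
  "G2_m i j = (if {i, j} = {1, 2} then 6
              else if {i, j} = {2, 3} then 3
              else if {i, j} = {1, 3} then 2
              else 1)"

inductive G2_weq :: "nat list \<Rightarrow> nat list \<Rightarrow> bool" where
  refl: "G2_weq w w"
| sym: "G2_weq v w \<Longrightarrow> G2_weq w v"
| trans: "G2_weq u v \<Longrightarrow> G2_weq v w \<Longrightarrow> G2_weq u w"
| square: "i \<in> G2_gens \<Longrightarrow> G2_weq (xs @ [i, i] @ ys) (xs @ ys)"
| braid: "i \<in> G2_gens \<Longrightarrow> j \<in> G2_gens \<Longrightarrow> i \<noteq> j \<Longrightarrow>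
           G2_weq (xs @ concat (replicate (G2_m i j) [i, j]) @ ys) (xs @ ys)"

definition G2_words :: "nat list set" where
  "G2_words = {w. set w \<subseteq> G2_gens}"

definition G2_cls :: "nat list \<Rightarrow> nat list set" where
  "G2_cls w = {v \<in> G2_words. G2_weq w v}"

definition affine_G2 :: "nat list set monoid" where
  "affine_G2 = \<lparr> carrier = G2_cls ` G2_words,
                 mult = (\<lambda>A B. G2_cls ((SOME a. a \<in> A) @ (SOME b. b \<in> B))),
                 one = G2_cls [] \<rparr>"

definition involution :: "('a, 'b) monoid_scheme \<Rightarrow> 'a \<Rightarrow> bool" where
  "involution G x \<longleftrightarrow> x \<in> carrier G \<and> x \<noteq> \<one>\<^bsub>G\<^esub> \<and> x \<otimes>\<^bsub>G\<^esub> x = \<one>\<^bsub>G\<^esub>"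

definition conj_class :: "('a, 'b) monoid_scheme \<Rightarrow> 'a \<Rightarrow> 'a set" where
  "conj_class G x = {g \<otimes>\<^bsub>G\<^esub> x \<otimes>\<^bsub>G\<^esub> inv\<^bsub>G\<^esub> g | g. g \<in> carrier G}"

definition cig_edge :: "('a, 'b) monoid_scheme \<Rightarrow> 'a set \<Rightarrow> 'a \<Rightarrow> 'a \<Rightarrow> bool" where
  "cig_edge G X x y \<longleftrightarrow> x \<in> X \<and> y \<in> X \<and> x \<noteq> y \<and> x \<otimes>\<^bsub>G\<^esub> y = y \<otimes>\<^bsub>G\<^esub> x"

definition cig_connected :: "('a, 'b) monoid_scheme \<Rightarrow> 'a set \<Rightarrow> bool" where
  "cig_connected G X \<longleftrightarrow> (\<forall>x\<in>X. \<forall>y\<in>X. (cig_edge G X)\<^sup>*\<^sup>* x y)"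

end

theory Submission
  imports Defs
begin

lemma weq_app_left: "G2_weq u v \<Longrightarrow> G2_weq (w @ u) (w @ v)"
proof (induction rule: G2_weq.induct)
  case (square i xs ys)
  then show ?case using G2_weq.square[of i "w @ xs" ys] by simp
next
  case (braid i j xs ys)
  then show ?case using G2_weq.braid[of i j "w @ xs" ys] by simp
qed (auto intro: G2_weq.intros)

lemma weq_app_right: "G2_weq u v \<Longrightarrow> G2_weq (u @ w) (v @ w)"
proof (induction rule: G2_weq.induct)
  case (square i xs ys)
  then show ?case using G2_weq.square[of i xs "ys @ w"] by simp
next
  case (braid i j xs ys)
  then show ?case using G2_weq.braid[of i j xs "ys @ w"] by simp
qed (auto intro: G2_weq.intros)

lemma weq_app: "G2_weq a b \<Longrightarrow> G2_weq c d \<Longrightarrow> G2_weq (a @ c) (b @ d)"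
  by (meson G2_weq.trans weq_app_left weq_app_right)

lemma weq_rev: "set w \<subseteq> G2_gens \<Longrightarrow> G2_weq (rev w @ w) []"
proof (induction w)
  case Nil then show ?case by (simp add: G2_weq.refl)
next
  case (Cons x w)
  have "G2_weq (rev w @ [x, x] @ w) (rev w @ w)"
    using Cons.prems G2_weq.square[of x "rev w" w] by simp
  then show ?case using Cons by (auto intro: G2_weq.trans)
qed

lemma weq_rev2: "set w \<subseteq> G2_gens \<Longrightarrow> G2_weq (w @ rev w) []"
  using weq_rev[of "rev w"] by simp

datatype mv = Isq nat nat | Dsq nat nat | Dbr nat nat nat

definition bm :: "nat \<Rightarrow> nat \<Rightarrow> nat" where
  "bm i j = (if (i = 1 \<and> j = 2) \<or> (i = 2 \<and> j = 1) then 6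
             else if (i = 2 \<and> j = 3) \<or> (i = 3 \<and> j = 2) then 3 else 2)"

lemma bm_eq: "i \<in> G2_gens \<Longrightarrow> j \<in> G2_gens \<Longrightarrow> i \<noteq> j \<Longrightarrow> bm i j = G2_m i j"
  unfolding G2_gens_def bm_def by (auto simp: insert_commute)

fun app_mv :: "mv \<Rightarrow> nat list \<Rightarrow> nat list option" where
  "app_mv (Isq p i) w = (if p \<le> length w \<and> i \<in> {1,2,3} then Some (take p w @ [i,i] @ drop p w) else None)"
| "app_mv (Dsq p i) w = (if i \<in> {1,2,3} \<and> take 2 (drop p w) = [i,i] then Some (take p w @ drop (p+2) w) else None)"
| "app_mv (Dbr p i j) w = (if i \<in> {1,2,3} \<and> j \<in> {1,2,3} \<and> i \<noteq> j \<and>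
      take (2 * bm i j) (drop p w) = concat (replicate (bm i j) [i,j])
     then Some (take p w @ drop (p + 2 * bm i j) w) else None)"

fun run :: "mv list \<Rightarrow> nat list \<Rightarrow> nat list option" where
  "run [] w = Some w"
| "run (m # ms) w = (case app_mv m w of None \<Rightarrow> None | Some w' \<Rightarrow> run ms w')"

lemma length_concat_rep: "length (concat (replicate n [i,j])) = 2 * n"
  by (induction n) auto

lemma app_mv_sound: "app_mv m w = Some w' \<Longrightarrow> G2_weq w w'"
proof (cases m)
  case (Isq p i)
  assume h: "app_mv m w = Some w'"
  then have "i \<in> G2_gens" "w' = take p w @ [i,i] @ drop p w"
    using Isq by (auto simp: G2_gens_def split: if_splits)
  then show ?thesis using G2_weq.square[of i "take p w" "drop p w"]
    by (auto intro: G2_weq.sym)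
next
  case (Dsq p i)
  assume h: "app_mv m w = Some w'"
  then have i: "i \<in> G2_gens" "w' = take p w @ drop (p+2) w" "take 2 (drop p w) = [i,i]"
    using Dsq by (auto simp: G2_gens_def split: if_splits)
  have "w = take p w @ take 2 (drop p w) @ drop 2 (drop p w)"
    by (simp only: append_take_drop_id)
  also have "\<dots> = take p w @ [i,i] @ drop (p+2) w" using i by (simp add: add.commute)
  finally show ?thesis using G2_weq.square[of i "take p w" "drop (p+2) w"] i by simp
next
  case (Dbr p i j)
  assume h: "app_mv m w = Some w'"
  then have i: "i \<in> G2_gens" "j \<in> G2_gens" "i \<noteq> j" "w' = take p w @ drop (p + 2 * bm i j) w"
    "take (2 * bm i j) (drop p w) = concat (replicate (bm i j) [i,j])"
    using Dbr by (auto simp: G2_gens_def split: if_splits)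
  have "w = take p w @ take (2 * bm i j) (drop p w) @ drop (2 * bm i j) (drop p w)"
    by (simp only: append_take_drop_id)
  also have "\<dots> = take p w @ concat (replicate (G2_m i j) [i,j]) @ drop (p + 2 * bm i j) w"
    using i bm_eq[of i j] by (simp add: add.commute)
  finally show ?thesis using G2_weq.braid[of i j "take p w" "drop (p + 2 * bm i j) w"] i by simp
qed

lemma run_sound: "run ms w = Some w' \<Longrightarrow> G2_weq w w'"
proof (induction ms arbitrary: w)
  case Nil then show ?case by (simp add: G2_weq.refl)
next
  case (Cons m ms)
  then obtain w1 where "app_mv m w = Some w1" "run ms w1 = Some w'"
    by (auto split: option.splits)
  then show ?case using Cons app_mv_sound by (blast intro: G2_weq.trans)
qed

lemma cert: "run ms (u @ rev v) = Some [] \<Longrightarrow> set v \<subseteq> G2_gens \<Longrightarrow> G2_weq u v"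
proof -
  assume a: "run ms (u @ rev v) = Some []" "set v \<subseteq> G2_gens"
  have "G2_weq (u @ rev v @ v) u" using weq_app_left[OF weq_rev[OF a(2)], of u] by simp
  moreover have "G2_weq ((u @ rev v) @ v) v" using weq_app_right[OF run_sound[OF a(1)], of v] by simp
  ultimately show ?thesis by (auto intro: G2_weq.trans G2_weq.sym)
qed

lemma rep_num: "concat (replicate 2 x) = x @ x" "concat (replicate 3 x) = x @ x @ x"
  "concat (replicate 6 x) = x @ x @ x @ x @ x @ x" "concat (replicate 1 x) = x"
  by (simp_all add: numeral_eq_Suc)

definition tau1w :: "nat list" where "tau1w = [3,2,1,2,1,2]"
definition tau2w :: "nat list" where "tau2w = [1,2,3,2,1,2]"
definition pw :: "int \<Rightarrow> nat list \<Rightarrow> nat list" where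
  "pw n t = (if n \<ge> 0 then concat (replicate (nat n) t) else concat (replicate (nat (-n)) (rev t)))"
definition Tw :: "int \<Rightarrow> int \<Rightarrow> nat list" where "Tw a b = pw a tau1w @ pw b tau2w"

lemma "G2_weq (tau1w @ tau2w) (tau2w @ tau1w)"
  by (rule cert[of "[Isq 7 2, Isq 8 1, Isq 9 2, Isq 10 1, Isq 11 2, Isq 12 1, Dbr 1 2 1, Dsq 6 2, Dsq 9 2, Dsq 8 1, Dsq 7 2, Isq 7 1, Isq 8 3, Dbr 5 1 3, Dsq 6 1, Isq 7 3, Isq 8 2, Isq 9 3, Dbr 4 2 3, Dsq 6 3, Dsq 5 2, Isq 5 1, Isq 6 3, Dbr 3 1 3, Dsq 4 1, Isq 2 3, Isq 3 1, Dbr 0 3 1, Isq 4 2, Isq 5 3, Isq 6 2, Dbr 1 3 2, Dsq 3 2, Dsq 2 3, Dsq 1 2, Dsq 0 1]"]) (simp_all add: tau1w_def tau2w_def bm_def G2_gens_def rep_num)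

lemma words_iff: "w \<in> G2_words \<longleftrightarrow> set w \<subseteq> G2_gens"
  by (simp add: G2_words_def)

lemma cls_weq: "G2_weq u v \<Longrightarrow> G2_cls u = G2_cls v"
  unfolding G2_cls_def by (auto intro: G2_weq.trans G2_weq.sym)

lemma in_cls: "u \<in> G2_words \<Longrightarrow> u \<in> G2_cls u"
  unfolding G2_cls_def by (simp add: G2_weq.refl)

lemma cls_eqD: "u \<in> G2_words \<Longrightarrow> G2_cls u = G2_cls v \<Longrightarrow> G2_weq v u"
  using in_cls[of u] unfolding G2_cls_def by auto

lemma words_app: "u \<in> G2_words \<Longrightarrow> v \<in> G2_words \<Longrightarrow> u @ v \<in> G2_words"
  by (simp add: G2_words_def)

lemma mult_cls: "u \<in> G2_words \<Longrightarrow> v \<in> G2_words \<Longrightarrow>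
   G2_cls u \<otimes>\<^bsub>affine_G2\<^esub> G2_cls v = G2_cls (u @ v)"
proof -
  assume u: "u \<in> G2_words" and v: "v \<in> G2_words"
  define a where "a = (SOME a. a \<in> G2_cls u)"
  define b where "b = (SOME b. b \<in> G2_cls v)"
  have "a \<in> G2_cls u" unfolding a_def using in_cls[OF u] by (rule someI)
  then have a: "G2_weq u a" by (simp add: G2_cls_def)
  have "b \<in> G2_cls v" unfolding b_def using in_cls[OF v] by (rule someI)
  then have b: "G2_weq v b" by (simp add: G2_cls_def)
  have "G2_weq (a @ b) (u @ v)" using weq_app[OF a b] by (rule G2_weq.sym)
  then have "G2_cls (a @ b) = G2_cls (u @ v)" by (rule cls_weq)
  then show ?thesis by (simp add: affine_G2_def a_def b_def)
qed

lemma carrier_G: "carrier affine_G2 = G2_cls ` G2_words"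
  by (simp add: affine_G2_def)

lemma one_G: "\<one>\<^bsub>affine_G2\<^esub> = G2_cls []"
  by (simp add: affine_G2_def)

lemma group_G: "group affine_G2"
proof (rule groupI)
  fix x y assume "x \<in> carrier affine_G2" "y \<in> carrier affine_G2"
  then obtain u v where "u \<in> G2_words" "v \<in> G2_words" "x = G2_cls u" "y = G2_cls v"
    by (auto simp: carrier_G)
  then show "x \<otimes>\<^bsub>affine_G2\<^esub> y \<in> carrier affine_G2"
    by (simp add: mult_cls carrier_G words_app)
next
  show "\<one>\<^bsub>affine_G2\<^esub> \<in> carrier affine_G2" by (simp add: carrier_G one_G G2_words_def)
next
  fix x y z assume "x \<in> carrier affine_G2" "y \<in> carrier affine_G2" "z \<in> carrier affine_G2"
  then obtain u v w where "u \<in> G2_words" "v \<in> G2_words" "w \<in> G2_words"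
      "x = G2_cls u" "y = G2_cls v" "z = G2_cls w"
    by (auto simp: carrier_G)
  then show "x \<otimes>\<^bsub>affine_G2\<^esub> y \<otimes>\<^bsub>affine_G2\<^esub> z =
      x \<otimes>\<^bsub>affine_G2\<^esub> (y \<otimes>\<^bsub>affine_G2\<^esub> z)"
    by (simp add: mult_cls words_app)
next
  fix x assume "x \<in> carrier affine_G2"
  then obtain u where "u \<in> G2_words" "x = G2_cls u" by (auto simp: carrier_G)
  then show "\<one>\<^bsub>affine_G2\<^esub> \<otimes>\<^bsub>affine_G2\<^esub> x = x"
    by (simp add: one_G mult_cls G2_words_def)
next
  fix x assume "x \<in> carrier affine_G2"
  then obtain u where u: "u \<in> G2_words" "x = G2_cls u" by (auto simp: carrier_G)
  have r: "rev u \<in> G2_words" using u by (simp add: G2_words_def)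
  have "G2_cls (rev u) \<otimes>\<^bsub>affine_G2\<^esub> x = G2_cls []"
    using u r weq_rev[of u] by (simp add: mult_cls words_iff cls_weq)
  then show "\<exists>y\<in>carrier affine_G2. y \<otimes>\<^bsub>affine_G2\<^esub> x = \<one>\<^bsub>affine_G2\<^esub>"
    using r by (auto simp: carrier_G one_G)
qed

interpretation G: group affine_G2 by (rule group_G)

lemma cls_carrier: "u \<in> G2_words \<Longrightarrow> G2_cls u \<in> carrier affine_G2"
  by (simp add: carrier_G)

lemma inv_cls: "u \<in> G2_words \<Longrightarrow> inv\<^bsub>affine_G2\<^esub> (G2_cls u) = G2_cls (rev u)"
proof -
  assume u: "u \<in> G2_words"
  have r: "rev u \<in> G2_words" using u by (simp add: G2_words_def)
  have "G2_cls (rev u) \<otimes>\<^bsub>affine_G2\<^esub> G2_cls u = \<one>\<^bsub>affine_G2\<^esub>"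
    using u r weq_rev[of u] by (simp add: mult_cls words_iff cls_weq one_G)
  then show ?thesis using G.inv_equality cls_carrier u r by blast
qed

lemma cls_rep: "u \<in> G2_words \<Longrightarrow> G2_cls (concat (replicate n u)) = G2_cls u [^]\<^bsub>affine_G2\<^esub> n"
proof (induction n)
  case 0 then show ?case by (simp add: one_G)
next
  case (Suc n)
  have w: "concat (replicate n u) \<in> G2_words" using Suc.prems by (auto simp: G2_words_def)
  have "G2_cls (concat (replicate (Suc n) u)) = G2_cls u \<otimes>\<^bsub>affine_G2\<^esub> G2_cls (concat (replicate n u))"
    using mult_cls[OF Suc.prems w] by simp
  also have "\<dots> = G2_cls u \<otimes>\<^bsub>affine_G2\<^esub> G2_cls u [^]\<^bsub>affine_G2\<^esub> n" using Suc by simp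
  also have "\<dots> = G2_cls u [^]\<^bsub>affine_G2\<^esub> Suc n"
    using G.nat_pow_Suc2 cls_carrier Suc.prems by simp
  finally show ?case .
qed

lemma cls_pw: "u \<in> G2_words \<Longrightarrow> G2_cls (pw n u) = G2_cls u [^]\<^bsub>affine_G2\<^esub> n"
proof (cases "n \<ge> 0")
  case True
  assume u: "u \<in> G2_words"
  have e: "n = int (nat n)" using True by simp
  have "G2_cls (pw n u) = G2_cls u [^]\<^bsub>affine_G2\<^esub> (nat n)"
    using True cls_rep[OF u, of "nat n"] by (simp add: pw_def)
  also have "\<dots> = G2_cls u [^]\<^bsub>affine_G2\<^esub> (int (nat n))" by (simp only: int_pow_int)
  finally show ?thesis using e by simp
next
  case False
  assume u: "u \<in> G2_words"
  have r: "rev u \<in> G2_words" using u by (simp add: G2_words_def)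
  have e: "n = - int (nat (-n))" using False by simp
  have "G2_cls (pw n u) = G2_cls (rev u) [^]\<^bsub>affine_G2\<^esub> nat (-n)"
    using False cls_rep[OF r] by (simp add: pw_def)
  also have "\<dots> = inv\<^bsub>affine_G2\<^esub> (G2_cls u [^]\<^bsub>affine_G2\<^esub> nat (-n))"
    using G.nat_pow_inv[OF cls_carrier[OF u], of "nat (-n)"] by (simp add: inv_cls[OF u])
  also have "\<dots> = G2_cls u [^]\<^bsub>affine_G2\<^esub> (- int (nat (-n)))"
    using G.int_pow_neg_int[OF cls_carrier[OF u], of "nat (-n)"] by simp
  finally have "G2_cls (pw n u) = G2_cls u [^]\<^bsub>affine_G2\<^esub> (- int (nat (-n)))" .
  then show ?thesis using e by metis
qed

type_synonym mat = "int \<times> int \<times> int \<times> int"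
type_synonym aff = "mat \<times> (int \<times> int)"

fun mmul :: "mat \<Rightarrow> mat \<Rightarrow> mat" where
  "mmul (a,b,c,d) (e,f,g,h) = (a*e+b*g, a*f+b*h, c*e+d*g, c*f+d*h)"
fun mapp :: "mat \<Rightarrow> int \<times> int \<Rightarrow> int \<times> int" where
  "mapp (a,b,c,d) (x,y) = (a*x+b*y, c*x+d*y)"
fun vadd :: "int \<times> int \<Rightarrow> int \<times> int \<Rightarrow> int \<times> int" where
  "vadd (a,b) (c,d) = (a+c, b+d)"
fun amul :: "aff \<Rightarrow> aff \<Rightarrow> aff" where
  "amul (M,u) (N,v) = (mmul M N, vadd (mapp M v) u)"
definition Imat :: mat where "Imat = (1,0,0,1)"
definition aid :: aff where "aid = (Imat,(0,0))"
definition gen :: "nat \<Rightarrow> aff" where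
  "gen i = (if i = 1 then ((1,1,0,-1),(0,0)) else if i = 2 then ((1,0,-1,-1),(0,0))
            else if i = 3 then ((-1,-1,0,1),(1,0)) else aid)"
fun ev :: "nat list \<Rightarrow> aff" where
  "ev [] = aid"
| "ev (i # w) = amul (gen i) (ev w)"

definition Wl :: "(mat \<times> nat list) list" where
  "Wl = [((1,0,0,1), []), ((1,1,0,-1), [1]), ((1,0,-1,-1), [2]), ((1,1,-1,0), [2,1]), ((0,-1,1,1), [1,2]), ((0,1,1,0), [1,2,1]), ((0,-1,-1,0), [2,1,2]), ((0,1,-1,-1), [2,1,2,1]), ((-1,-1,1,0), [1,2,1,2]), ((-1,0,1,1), [1,2,1,2,1]), ((-1,-1,0,1), [2,1,2,1,2]), ((-1,0,0,-1), [2,1,2,1,2,1])]"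

definition wword :: "mat \<Rightarrow> nat list" where
  "wword M = (case map_of Wl M of Some w \<Rightarrow> w | None \<Rightarrow> [])"
definition W12 :: "mat set" where "W12 = set (map fst Wl)"


lemma ci_1_1: "G2_weq ([1] @ tau1w @ [1]) (Tw (fst (mapp (fst (gen 1)) (1,0))) (snd (mapp (fst (gen 1)) (1,0))))"
  by (rule cert[of "[Isq 2 1, Isq 3 3, Dbr 0 1 3, Isq 7 1, Isq 8 2, Isq 9 1, Isq 10 2, Isq 11 1, Isq 12 2, Dbr 1 1 2, Dsq 6 1, Dsq 5 2, Dsq 4 1, Dsq 3 2, Dsq 2 1, Dsq 1 2, Dsq 0 3]"]) (simp_all add: tau1w_def tau2w_def bm_def G2_gens_def rep_num Tw_def pw_def gen_def wword_def Wl_def)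

lemma ci_1_2: "G2_weq ([1] @ tau2w @ [1]) (Tw (fst (mapp (fst (gen 1)) (0,1))) (snd (mapp (fst (gen 1)) (0,1))))"
  by (rule cert[of "[Dsq 0 1, Dsq 5 1, Dsq 4 2, Isq 3 3, Isq 4 2, Isq 5 3, Dbr 0 2 3, Isq 4 3, Isq 5 1, Dbr 2 3 1, Dsq 3 3, Dsq 5 2, Dsq 4 1, Dsq 3 2, Dsq 2 1, Dsq 1 2, Dsq 0 3]"]) (simp_all add: tau1w_def tau2w_def bm_def G2_gens_def rep_num Tw_def pw_def gen_def wword_def Wl_def)

lemma ci_2_1: "G2_weq ([2] @ tau1w @ [2]) (Tw (fst (mapp (fst (gen 2)) (1,0))) (snd (mapp (fst (gen 2)) (1,0))))"
  by (rule cert[of "[Dsq 6 2, Dsq 5 1, Dsq 4 2, Isq 3 3, Isq 4 2, Isq 5 3, Dbr 0 2 3, Isq 4 3, Isq 5 1, Dbr 2 3 1, Dsq 3 3, Dsq 5 2, Dsq 4 1, Dsq 3 2, Dsq 2 1, Dsq 1 2, Dsq 0 3]"]) (simp_all add: tau1w_def tau2w_def bm_def G2_gens_def rep_num Tw_def pw_def gen_def wword_def Wl_def)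

lemma ci_2_2: "G2_weq ([2] @ tau2w @ [2]) (Tw (fst (mapp (fst (gen 2)) (0,1))) (snd (mapp (fst (gen 2)) (0,1))))"
  by (rule cert[of "[Dsq 6 2, Dsq 5 1, Dsq 4 2, Dsq 3 3, Dsq 2 2, Dsq 1 1, Dsq 0 2]"]) (simp_all add: tau1w_def tau2w_def bm_def G2_gens_def rep_num Tw_def pw_def gen_def wword_def Wl_def)

lemma ci_3_1: "G2_weq ([3] @ tau1w @ [3]) (Tw (fst (mapp (fst (gen 3)) (1,0))) (snd (mapp (fst (gen 3)) (1,0))))"
  by (rule cert[of "[Dsq 0 3, Dsq 5 3, Dsq 4 2, Dsq 3 1, Dsq 2 2, Dsq 1 1, Dsq 0 2]"]) (simp_all add: tau1w_def tau2w_def bm_def G2_gens_def rep_num Tw_def pw_def gen_def wword_def Wl_def)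

lemma ci_3_2: "G2_weq ([3] @ tau2w @ [3]) (Tw (fst (mapp (fst (gen 3)) (0,1))) (snd (mapp (fst (gen 3)) (0,1))))"
  by (rule cert[of "[Isq 2 3, Isq 3 1, Dbr 0 3 1, Isq 4 2, Isq 5 3, Isq 6 2, Dbr 1 3 2, Dsq 3 2, Isq 4 3, Isq 5 1, Dbr 2 3 1, Isq 6 2, Isq 7 3, Isq 8 2, Dbr 3 3 2, Dsq 5 2, Isq 6 3, Isq 7 1, Dbr 4 3 1, Isq 8 2, Isq 9 3, Isq 10 2, Dbr 5 3 2, Dsq 7 2, Isq 6 1, Isq 7 2, Isq 8 1, Isq 9 2, Isq 10 1, Isq 11 2, Dbr 0 1 2, Isq 7 1, Isq 8 3, Dbr 5 1 3, Dsq 6 1, Dsq 5 3, Dsq 4 2, Dsq 3 1, Dsq 2 2, Dsq 1 1, Dsq 0 2]"]) (simp_all add: tau1w_def tau2w_def bm_def G2_gens_def rep_num Tw_def pw_def gen_def wword_def Wl_def)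

lemma cii_1_0: "G2_weq ([1] @ wword (1,0,0,1)) (Tw (fst (snd (gen 1))) (snd (snd (gen 1))) @ wword (mmul (fst (gen 1)) (1,0,0,1)))"
  by (rule cert[of "[Dsq 0 1]"]) (simp_all add: tau1w_def tau2w_def bm_def G2_gens_def rep_num Tw_def pw_def gen_def wword_def Wl_def)

lemma cii_1_1: "G2_weq ([1] @ wword (1,1,0,-1)) (Tw (fst (snd (gen 1))) (snd (snd (gen 1))) @ wword (mmul (fst (gen 1)) (1,1,0,-1)))"
  by (rule cert[of "[Dsq 0 1]"]) (simp_all add: tau1w_def tau2w_def bm_def G2_gens_def rep_num Tw_def pw_def gen_def wword_def Wl_def)

lemma cii_1_2: "G2_weq ([1] @ wword (1,0,-1,-1)) (Tw (fst (snd (gen 1))) (snd (snd (gen 1))) @ wword (mmul (fst (gen 1)) (1,0,-1,-1)))"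
  by (rule cert[of "[Dsq 1 2, Dsq 0 1]"]) (simp_all add: tau1w_def tau2w_def bm_def G2_gens_def rep_num Tw_def pw_def gen_def wword_def Wl_def)

lemma cii_1_3: "G2_weq ([1] @ wword (1,1,-1,0)) (Tw (fst (snd (gen 1))) (snd (snd (gen 1))) @ wword (mmul (fst (gen 1)) (1,1,-1,0)))"
  by (rule cert[of "[Dsq 2 1, Dsq 1 2, Dsq 0 1]"]) (simp_all add: tau1w_def tau2w_def bm_def G2_gens_def rep_num Tw_def pw_def gen_def wword_def Wl_def)

lemma cii_1_4: "G2_weq ([1] @ wword (0,-1,1,1)) (Tw (fst (snd (gen 1))) (snd (snd (gen 1))) @ wword (mmul (fst (gen 1)) (0,-1,1,1)))"
  by (rule cert[of "[Dsq 0 1, Dsq 0 2]"]) (simp_all add: tau1w_def tau2w_def bm_def G2_gens_def rep_num Tw_def pw_def gen_def wword_def Wl_def)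

lemma cii_1_5: "G2_weq ([1] @ wword (0,1,1,0)) (Tw (fst (snd (gen 1))) (snd (snd (gen 1))) @ wword (mmul (fst (gen 1)) (0,1,1,0)))"
  by (rule cert[of "[Dsq 0 1, Dsq 1 1, Dsq 0 2]"]) (simp_all add: tau1w_def tau2w_def bm_def G2_gens_def rep_num Tw_def pw_def gen_def wword_def Wl_def)

lemma cii_1_6: "G2_weq ([1] @ wword (0,-1,-1,0)) (Tw (fst (snd (gen 1))) (snd (snd (gen 1))) @ wword (mmul (fst (gen 1)) (0,-1,-1,0)))"
  by (rule cert[of "[Dsq 3 2, Dsq 2 1, Dsq 1 2, Dsq 0 1]"]) (simp_all add: tau1w_def tau2w_def bm_def G2_gens_def rep_num Tw_def pw_def gen_def wword_def Wl_def)

lemma cii_1_7: "G2_weq ([1] @ wword (0,1,-1,-1)) (Tw (fst (snd (gen 1))) (snd (snd (gen 1))) @ wword (mmul (fst (gen 1)) (0,1,-1,-1)))"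
  by (rule cert[of "[Dsq 4 1, Dsq 3 2, Dsq 2 1, Dsq 1 2, Dsq 0 1]"]) (simp_all add: tau1w_def tau2w_def bm_def G2_gens_def rep_num Tw_def pw_def gen_def wword_def Wl_def)

lemma cii_1_8: "G2_weq ([1] @ wword (-1,-1,1,0)) (Tw (fst (snd (gen 1))) (snd (snd (gen 1))) @ wword (mmul (fst (gen 1)) (-1,-1,1,0)))"
  by (rule cert[of "[Dsq 0 1, Dsq 2 2, Dsq 1 1, Dsq 0 2]"]) (simp_all add: tau1w_def tau2w_def bm_def G2_gens_def rep_num Tw_def pw_def gen_def wword_def Wl_def)

lemma cii_1_9: "G2_weq ([1] @ wword (-1,0,1,1)) (Tw (fst (snd (gen 1))) (snd (snd (gen 1))) @ wword (mmul (fst (gen 1)) (-1,0,1,1)))"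
  by (rule cert[of "[Dsq 0 1, Dsq 3 1, Dsq 2 2, Dsq 1 1, Dsq 0 2]"]) (simp_all add: tau1w_def tau2w_def bm_def G2_gens_def rep_num Tw_def pw_def gen_def wword_def Wl_def)

lemma cii_1_10: "G2_weq ([1] @ wword (-1,-1,0,1)) (Tw (fst (snd (gen 1))) (snd (snd (gen 1))) @ wword (mmul (fst (gen 1)) (-1,-1,0,1)))"
  by (rule cert[of "[Isq 6 1, Isq 7 2, Isq 8 1, Isq 9 2, Isq 10 1, Isq 11 2, Dbr 0 1 2, Dsq 5 1, Dsq 4 2, Dsq 3 1, Dsq 2 2, Dsq 1 1, Dsq 0 2]"]) (simp_all add: tau1w_def tau2w_def bm_def G2_gens_def rep_num Tw_def pw_def gen_def wword_def Wl_def)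

lemma cii_1_11: "G2_weq ([1] @ wword (-1,0,0,-1)) (Tw (fst (snd (gen 1))) (snd (snd (gen 1))) @ wword (mmul (fst (gen 1)) (-1,0,0,-1)))"
  by (rule cert[of "[Isq 6 1, Isq 7 2, Isq 8 1, Isq 9 2, Isq 10 1, Isq 11 2, Dbr 0 1 2, Dsq 5 1, Dsq 4 2, Dsq 3 1, Dsq 2 2, Dsq 1 1, Dsq 0 2]"]) (simp_all add: tau1w_def tau2w_def bm_def G2_gens_def rep_num Tw_def pw_def gen_def wword_def Wl_def)

lemma cii_2_0: "G2_weq ([2] @ wword (1,0,0,1)) (Tw (fst (snd (gen 2))) (snd (snd (gen 2))) @ wword (mmul (fst (gen 2)) (1,0,0,1)))"
  by (rule cert[of "[Dsq 0 2]"]) (simp_all add: tau1w_def tau2w_def bm_def G2_gens_def rep_num Tw_def pw_def gen_def wword_def Wl_def)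

lemma cii_2_1: "G2_weq ([2] @ wword (1,1,0,-1)) (Tw (fst (snd (gen 2))) (snd (snd (gen 2))) @ wword (mmul (fst (gen 2)) (1,1,0,-1)))"
  by (rule cert[of "[Dsq 1 1, Dsq 0 2]"]) (simp_all add: tau1w_def tau2w_def bm_def G2_gens_def rep_num Tw_def pw_def gen_def wword_def Wl_def)

lemma cii_2_2: "G2_weq ([2] @ wword (1,0,-1,-1)) (Tw (fst (snd (gen 2))) (snd (snd (gen 2))) @ wword (mmul (fst (gen 2)) (1,0,-1,-1)))"
  by (rule cert[of "[Dsq 0 2]"]) (simp_all add: tau1w_def tau2w_def bm_def G2_gens_def rep_num Tw_def pw_def gen_def wword_def Wl_def)

lemma cii_2_3: "G2_weq ([2] @ wword (1,1,-1,0)) (Tw (fst (snd (gen 2))) (snd (snd (gen 2))) @ wword (mmul (fst (gen 2)) (1,1,-1,0)))"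
  by (rule cert[of "[Dsq 0 2, Dsq 0 1]"]) (simp_all add: tau1w_def tau2w_def bm_def G2_gens_def rep_num Tw_def pw_def gen_def wword_def Wl_def)

lemma cii_2_4: "G2_weq ([2] @ wword (0,-1,1,1)) (Tw (fst (snd (gen 2))) (snd (snd (gen 2))) @ wword (mmul (fst (gen 2)) (0,-1,1,1)))"
  by (rule cert[of "[Dsq 2 2, Dsq 1 1, Dsq 0 2]"]) (simp_all add: tau1w_def tau2w_def bm_def G2_gens_def rep_num Tw_def pw_def gen_def wword_def Wl_def)

lemma cii_2_5: "G2_weq ([2] @ wword (0,1,1,0)) (Tw (fst (snd (gen 2))) (snd (snd (gen 2))) @ wword (mmul (fst (gen 2)) (0,1,1,0)))"
  by (rule cert[of "[Dsq 3 1, Dsq 2 2, Dsq 1 1, Dsq 0 2]"]) (simp_all add: tau1w_def tau2w_def bm_def G2_gens_def rep_num Tw_def pw_def gen_def wword_def Wl_def)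

lemma cii_2_6: "G2_weq ([2] @ wword (0,-1,-1,0)) (Tw (fst (snd (gen 2))) (snd (snd (gen 2))) @ wword (mmul (fst (gen 2)) (0,-1,-1,0)))"
  by (rule cert[of "[Dsq 0 2, Dsq 1 2, Dsq 0 1]"]) (simp_all add: tau1w_def tau2w_def bm_def G2_gens_def rep_num Tw_def pw_def gen_def wword_def Wl_def)

lemma cii_2_7: "G2_weq ([2] @ wword (0,1,-1,-1)) (Tw (fst (snd (gen 2))) (snd (snd (gen 2))) @ wword (mmul (fst (gen 2)) (0,1,-1,-1)))"
  by (rule cert[of "[Dsq 0 2, Dsq 2 1, Dsq 1 2, Dsq 0 1]"]) (simp_all add: tau1w_def tau2w_def bm_def G2_gens_def rep_num Tw_def pw_def gen_def wword_def Wl_def)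

lemma cii_2_8: "G2_weq ([2] @ wword (-1,-1,1,0)) (Tw (fst (snd (gen 2))) (snd (snd (gen 2))) @ wword (mmul (fst (gen 2)) (-1,-1,1,0)))"
  by (rule cert[of "[Dsq 4 2, Dsq 3 1, Dsq 2 2, Dsq 1 1, Dsq 0 2]"]) (simp_all add: tau1w_def tau2w_def bm_def G2_gens_def rep_num Tw_def pw_def gen_def wword_def Wl_def)

lemma cii_2_9: "G2_weq ([2] @ wword (-1,0,1,1)) (Tw (fst (snd (gen 2))) (snd (snd (gen 2))) @ wword (mmul (fst (gen 2)) (-1,0,1,1)))"
  by (rule cert[of "[Dsq 5 1, Dsq 4 2, Dsq 3 1, Dsq 2 2, Dsq 1 1, Dsq 0 2]"]) (simp_all add: tau1w_def tau2w_def bm_def G2_gens_def rep_num Tw_def pw_def gen_def wword_def Wl_def)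

lemma cii_2_10: "G2_weq ([2] @ wword (-1,-1,0,1)) (Tw (fst (snd (gen 2))) (snd (snd (gen 2))) @ wword (mmul (fst (gen 2)) (-1,-1,0,1)))"
  by (rule cert[of "[Dsq 0 2, Dsq 3 2, Dsq 2 1, Dsq 1 2, Dsq 0 1]"]) (simp_all add: tau1w_def tau2w_def bm_def G2_gens_def rep_num Tw_def pw_def gen_def wword_def Wl_def)

lemma cii_2_11: "G2_weq ([2] @ wword (-1,0,0,-1)) (Tw (fst (snd (gen 2))) (snd (snd (gen 2))) @ wword (mmul (fst (gen 2)) (-1,0,0,-1)))"
  by (rule cert[of "[Dsq 0 2, Dsq 4 1, Dsq 3 2, Dsq 2 1, Dsq 1 2, Dsq 0 1]"]) (simp_all add: tau1w_def tau2w_def bm_def G2_gens_def rep_num Tw_def pw_def gen_def wword_def Wl_def)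

lemma cii_3_0: "G2_weq ([3] @ wword (1,0,0,1)) (Tw (fst (snd (gen 3))) (snd (snd (gen 3))) @ wword (mmul (fst (gen 3)) (1,0,0,1)))"
  by (rule cert[of "[Dsq 5 2, Dsq 4 1, Dsq 3 2, Dsq 2 1, Dsq 1 2, Dsq 0 3]"]) (simp_all add: tau1w_def tau2w_def bm_def G2_gens_def rep_num Tw_def pw_def gen_def wword_def Wl_def)

lemma cii_3_1: "G2_weq ([3] @ wword (1,1,0,-1)) (Tw (fst (snd (gen 3))) (snd (snd (gen 3))) @ wword (mmul (fst (gen 3)) (1,1,0,-1)))"
  by (rule cert[of "[Dsq 1 1, Dsq 5 2, Dsq 4 1, Dsq 3 2, Dsq 2 1, Dsq 1 2, Dsq 0 3]"]) (simp_all add: tau1w_def tau2w_def bm_def G2_gens_def rep_num Tw_def pw_def gen_def wword_def Wl_def)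

lemma cii_3_2: "G2_weq ([3] @ wword (1,0,-1,-1)) (Tw (fst (snd (gen 3))) (snd (snd (gen 3))) @ wword (mmul (fst (gen 3)) (1,0,-1,-1)))"
  by (rule cert[of "[Dsq 5 2, Dsq 4 1, Dsq 3 2, Dsq 2 1, Dsq 1 2, Dsq 0 3]"]) (simp_all add: tau1w_def tau2w_def bm_def G2_gens_def rep_num Tw_def pw_def gen_def wword_def Wl_def)

lemma cii_3_3: "G2_weq ([3] @ wword (1,1,-1,0)) (Tw (fst (snd (gen 3))) (snd (snd (gen 3))) @ wword (mmul (fst (gen 3)) (1,1,-1,0)))"
  by (rule cert[of "[Dsq 5 2, Dsq 4 1, Dsq 3 2, Dsq 2 1, Dsq 1 2, Dsq 0 3]"]) (simp_all add: tau1w_def tau2w_def bm_def G2_gens_def rep_num Tw_def pw_def gen_def wword_def Wl_def)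

lemma cii_3_4: "G2_weq ([3] @ wword (0,-1,1,1)) (Tw (fst (snd (gen 3))) (snd (snd (gen 3))) @ wword (mmul (fst (gen 3)) (0,-1,1,1)))"
  by (rule cert[of "[Isq 7 1, Isq 8 2, Isq 9 1, Isq 10 2, Isq 11 1, Isq 12 2, Dbr 1 1 2, Dsq 6 1, Dsq 5 2, Dsq 4 1, Dsq 3 2, Dsq 2 1, Dsq 1 2, Dsq 0 3]"]) (simp_all add: tau1w_def tau2w_def bm_def G2_gens_def rep_num Tw_def pw_def gen_def wword_def Wl_def)

lemma cii_3_5: "G2_weq ([3] @ wword (0,1,1,0)) (Tw (fst (snd (gen 3))) (snd (snd (gen 3))) @ wword (mmul (fst (gen 3)) (0,1,1,0)))"
  by (rule cert[of "[Isq 7 1, Isq 8 2, Isq 9 1, Isq 10 2, Isq 11 1, Isq 12 2, Dbr 1 1 2, Dsq 6 1, Dsq 5 2, Dsq 4 1, Dsq 3 2, Dsq 2 1, Dsq 1 2, Dsq 0 3]"]) (simp_all add: tau1w_def tau2w_def bm_def G2_gens_def rep_num Tw_def pw_def gen_def wword_def Wl_def)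

lemma cii_3_6: "G2_weq ([3] @ wword (0,-1,-1,0)) (Tw (fst (snd (gen 3))) (snd (snd (gen 3))) @ wword (mmul (fst (gen 3)) (0,-1,-1,0)))"
  by (rule cert[of "[Dsq 5 2, Dsq 4 1, Dsq 3 2, Dsq 2 1, Dsq 1 2, Dsq 0 3]"]) (simp_all add: tau1w_def tau2w_def bm_def G2_gens_def rep_num Tw_def pw_def gen_def wword_def Wl_def)

lemma cii_3_7: "G2_weq ([3] @ wword (0,1,-1,-1)) (Tw (fst (snd (gen 3))) (snd (snd (gen 3))) @ wword (mmul (fst (gen 3)) (0,1,-1,-1)))"
  by (rule cert[of "[Dsq 5 2, Dsq 4 1, Dsq 3 2, Dsq 2 1, Dsq 1 2, Dsq 0 3]"]) (simp_all add: tau1w_def tau2w_def bm_def G2_gens_def rep_num Tw_def pw_def gen_def wword_def Wl_def)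

lemma cii_3_8: "G2_weq ([3] @ wword (-1,-1,1,0)) (Tw (fst (snd (gen 3))) (snd (snd (gen 3))) @ wword (mmul (fst (gen 3)) (-1,-1,1,0)))"
  by (rule cert[of "[Isq 7 1, Isq 8 2, Isq 9 1, Isq 10 2, Isq 11 1, Isq 12 2, Dbr 1 1 2, Dsq 6 1, Dsq 5 2, Dsq 4 1, Dsq 3 2, Dsq 2 1, Dsq 1 2, Dsq 0 3]"]) (simp_all add: tau1w_def tau2w_def bm_def G2_gens_def rep_num Tw_def pw_def gen_def wword_def Wl_def)

lemma cii_3_9: "G2_weq ([3] @ wword (-1,0,1,1)) (Tw (fst (snd (gen 3))) (snd (snd (gen 3))) @ wword (mmul (fst (gen 3)) (-1,0,1,1)))"
  by (rule cert[of "[Isq 7 1, Isq 8 2, Isq 9 1, Isq 10 2, Isq 11 1, Isq 12 2, Dbr 1 1 2, Dsq 6 1, Dsq 5 2, Dsq 4 1, Dsq 3 2, Dsq 2 1, Dsq 1 2, Dsq 0 3]"]) (simp_all add: tau1w_def tau2w_def bm_def G2_gens_def rep_num Tw_def pw_def gen_def wword_def Wl_def)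

lemma cii_3_10: "G2_weq ([3] @ wword (-1,-1,0,1)) (Tw (fst (snd (gen 3))) (snd (snd (gen 3))) @ wword (mmul (fst (gen 3)) (-1,-1,0,1)))"
  by (rule cert[of "[Dsq 5 2, Dsq 4 1, Dsq 3 2, Dsq 2 1, Dsq 1 2, Dsq 0 3]"]) (simp_all add: tau1w_def tau2w_def bm_def G2_gens_def rep_num Tw_def pw_def gen_def wword_def Wl_def)

lemma cii_3_11: "G2_weq ([3] @ wword (-1,0,0,-1)) (Tw (fst (snd (gen 3))) (snd (snd (gen 3))) @ wword (mmul (fst (gen 3)) (-1,0,0,-1)))"
  by (rule cert[of "[Dsq 6 1, Dsq 5 2, Dsq 4 1, Dsq 3 2, Dsq 2 1, Dsq 1 2, Dsq 0 3]"]) (simp_all add: tau1w_def tau2w_def bm_def G2_gens_def rep_num Tw_def pw_def gen_def wword_def Wl_def)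

lemma ciii: "G2_weq (tau1w @ tau2w) (tau2w @ tau1w)"
  by (rule cert[of "[Isq 7 2, Isq 8 1, Isq 9 2, Isq 10 1, Isq 11 2, Isq 12 1, Dbr 1 2 1, Dsq 6 2, Dsq 9 2, Dsq 8 1, Dsq 7 2, Isq 7 1, Isq 8 3, Dbr 5 1 3, Dsq 6 1, Isq 7 3, Isq 8 2, Isq 9 3, Dbr 4 2 3, Dsq 6 3, Dsq 5 2, Isq 5 1, Isq 6 3, Dbr 3 1 3, Dsq 4 1, Isq 2 3, Isq 3 1, Dbr 0 3 1, Isq 4 2, Isq 5 3, Isq 6 2, Dbr 1 3 2, Dsq 3 2, Dsq 2 3, Dsq 1 2, Dsq 0 1]"]) (simp_all add: tau1w_def tau2w_def bm_def G2_gens_def rep_num Tw_def pw_def gen_def wword_def Wl_def)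

lemmas ci_all = ci_1_1 ci_1_2 ci_2_1 ci_2_2 ci_3_1 ci_3_2

lemmas cii_all = cii_1_0 cii_1_1 cii_1_2 cii_1_3 cii_1_4 cii_1_5 cii_1_6 cii_1_7 cii_1_8 cii_1_9 cii_1_10 cii_1_11 cii_2_0 cii_2_1 cii_2_2 cii_2_3 cii_2_4 cii_2_5 cii_2_6 cii_2_7 cii_2_8 cii_2_9 cii_2_10 cii_2_11 cii_3_0 cii_3_1 cii_3_2 cii_3_3 cii_3_4 cii_3_5 cii_3_6 cii_3_7 cii_3_8 cii_3_9 cii_3_10 cii_3_11

abbreviation GG where "GG \<equiv> affine_G2"

lemma aff_cases: obtains a b c d x y where "X = ((a,b,c,d),(x,y))"
  by (metis prod.exhaust)

lemma mmul_assoc: "mmul (mmul A B) C = mmul A (mmul B C)"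
  by (cases A rule: prod_cases4; cases B rule: prod_cases4; cases C rule: prod_cases4)
     (simp add: algebra_simps)

lemma amul_assoc: "amul (amul X Y) Z = amul X (amul Y Z)"
  by (cases X rule: aff_cases; cases Y rule: aff_cases; cases Z rule: aff_cases)
     (simp add: algebra_simps)

lemma amul_aid[simp]: "amul aid X = X" "amul X aid = X"
  by (cases X rule: aff_cases; simp add: aid_def Imat_def)+

lemma ev_append: "ev (u @ v) = amul (ev u) (ev v)"
  by (induction u) (simp_all add: amul_assoc)

lemma gen_sq: "i \<in> G2_gens \<Longrightarrow> amul (gen i) (gen i) = aid"
  by (auto simp: G2_gens_def gen_def aid_def Imat_def)

lemma gen_braid: "i \<in> G2_gens \<Longrightarrow> j \<in> G2_gens \<Longrightarrow> i \<noteq> j \<Longrightarrow>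
   ev (concat (replicate (G2_m i j) [i,j])) = aid"
proof -
  assume a: "i \<in> G2_gens" "j \<in> G2_gens" "i \<noteq> j"
  have e: "G2_m i j = bm i j" using bm_eq[OF a] by simp
  show ?thesis unfolding e using a by (auto simp: G2_gens_def bm_def rep_num gen_def aid_def Imat_def)
qed

lemma ev_weq: "G2_weq u v \<Longrightarrow> ev u = ev v"
proof (induction rule: G2_weq.induct)
  case (square i xs ys)
  then show ?case by (simp add: ev_append gen_sq amul_assoc[symmetric])
next
  case (braid i j xs ys)
  then show ?case by (simp add: ev_append gen_braid del: G2_m.simps)
qed auto

definition Phi :: "nat list set \<Rightarrow> aff" where "Phi x = ev (SOME w. w \<in> x)"

lemma Phi_cls: "u \<in> G2_words \<Longrightarrow> Phi (G2_cls u) = ev u"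
proof -
  assume u: "u \<in> G2_words"
  have "(SOME w. w \<in> G2_cls u) \<in> G2_cls u" using in_cls[OF u] by (rule someI)
  then have "G2_weq u (SOME w. w \<in> G2_cls u)" by (simp add: G2_cls_def)
  then show ?thesis unfolding Phi_def by (simp add: ev_weq)
qed

lemma Phi_mult: "x \<in> carrier GG \<Longrightarrow> y \<in> carrier GG \<Longrightarrow>
  Phi (x \<otimes>\<^bsub>GG\<^esub> y) = amul (Phi x) (Phi y)"
  by (auto simp: carrier_G mult_cls Phi_cls words_app ev_append)

lemma Phi_one: "Phi \<one>\<^bsub>GG\<^esub> = aid"
  by (simp add: one_G Phi_cls G2_words_def)

definition gs :: "nat \<Rightarrow> nat list set" where "gs s = G2_cls [s]"
definition tau1 where "tau1 = G2_cls tau1w"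
definition tau2 where "tau2 = G2_cls tau2w"
definition T :: "int \<Rightarrow> int \<Rightarrow> nat list set" where
  "T a b = tau1 [^]\<^bsub>GG\<^esub> a \<otimes>\<^bsub>GG\<^esub> tau2 [^]\<^bsub>GG\<^esub> b"

lemma tau_words: "tau1w \<in> G2_words" "tau2w \<in> G2_words"
  by (simp_all add: tau1w_def tau2w_def G2_words_def G2_gens_def)

lemma tau_carrier[simp]: "tau1 \<in> carrier GG" "tau2 \<in> carrier GG"
  by (simp_all add: tau1_def tau2_def cls_carrier tau_words)

lemma gs_carrier[simp]: "s \<in> G2_gens \<Longrightarrow> gs s \<in> carrier GG"
  by (simp add: gs_def cls_carrier G2_words_def)

lemma gs_sq: "s \<in> G2_gens \<Longrightarrow> gs s \<otimes>\<^bsub>GG\<^esub> gs s = \<one>\<^bsub>GG\<^esub>"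
  using G2_weq.square[of s "[]" "[]"]
  by (simp add: gs_def mult_cls G2_words_def one_G cls_weq)

lemma T_carrier[simp]: "T a b \<in> carrier GG"
  by (simp add: T_def)

lemma pw_words: "u \<in> G2_words \<Longrightarrow> pw n u \<in> G2_words"
  by (auto simp: pw_def G2_words_def)

lemma cls_Tw: "G2_cls (Tw a b) = T a b"
proof -
  have "G2_cls (Tw a b) = G2_cls (pw a tau1w) \<otimes>\<^bsub>GG\<^esub> G2_cls (pw b tau2w)"
    unfolding Tw_def by (rule mult_cls[symmetric]) (simp_all add: pw_words tau_words)
  then show ?thesis by (simp add: cls_pw tau_words T_def tau1_def tau2_def)
qed

lemma inv_commute:
  assumes z: "z \<in> carrier GG" and y: "y \<in> carrier GG" and c: "z \<otimes>\<^bsub>GG\<^esub> y = y \<otimes>\<^bsub>GG\<^esub> z"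
  shows "inv\<^bsub>GG\<^esub> z \<otimes>\<^bsub>GG\<^esub> y = y \<otimes>\<^bsub>GG\<^esub> inv\<^bsub>GG\<^esub> z"
proof -
  have "inv\<^bsub>GG\<^esub> z \<otimes>\<^bsub>GG\<^esub> y = inv\<^bsub>GG\<^esub> z \<otimes>\<^bsub>GG\<^esub> y \<otimes>\<^bsub>GG\<^esub> (z \<otimes>\<^bsub>GG\<^esub> inv\<^bsub>GG\<^esub> z)"
    using z y by simp
  also have "\<dots> = inv\<^bsub>GG\<^esub> z \<otimes>\<^bsub>GG\<^esub> (z \<otimes>\<^bsub>GG\<^esub> y) \<otimes>\<^bsub>GG\<^esub> inv\<^bsub>GG\<^esub> z"
    using z y c by (simp add: G.m_assoc)
  also have "\<dots> = y \<otimes>\<^bsub>GG\<^esub> inv\<^bsub>GG\<^esub> z"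
    using z y by (simp add: G.m_assoc[symmetric])
  finally show ?thesis .
qed

lemma pow_comm1:
  assumes x: "x \<in> carrier GG" and y: "y \<in> carrier GG" and c: "x \<otimes>\<^bsub>GG\<^esub> y = y \<otimes>\<^bsub>GG\<^esub> x"
  shows "x [^]\<^bsub>GG\<^esub> (a::int) \<otimes>\<^bsub>GG\<^esub> y = y \<otimes>\<^bsub>GG\<^esub> x [^]\<^bsub>GG\<^esub> a"
proof (cases "a \<ge> 0")
  case True
  then have a: "a = int (nat a)" by simp
  have e: "x [^]\<^bsub>GG\<^esub> a = x [^]\<^bsub>GG\<^esub> (nat a)" using int_pow_int a by metis
  show ?thesis using G.group_commutes_pow[OF c x y, of "nat a"] e by simp
next
  case False
  then have a: "a = - int (nat (-a))" by simp
  have zc: "x [^]\<^bsub>GG\<^esub> (nat (-a)) \<otimes>\<^bsub>GG\<^esub> y = y \<otimes>\<^bsub>GG\<^esub> x [^]\<^bsub>GG\<^esub> (nat (-a))"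
    using G.group_commutes_pow[OF c x y] by simp
  have "x [^]\<^bsub>GG\<^esub> a = inv\<^bsub>GG\<^esub> (x [^]\<^bsub>GG\<^esub> (nat (-a)))"
    using G.int_pow_neg_int[OF x, of "nat (-a)"] a by metis
  then show ?thesis using inv_commute[OF _ y zc] x by simp
qed

lemma pow_comm2:
  assumes x: "x \<in> carrier GG" and y: "y \<in> carrier GG" and c: "x \<otimes>\<^bsub>GG\<^esub> y = y \<otimes>\<^bsub>GG\<^esub> x"
  shows "x [^]\<^bsub>GG\<^esub> (a::int) \<otimes>\<^bsub>GG\<^esub> y [^]\<^bsub>GG\<^esub> (b::int) = y [^]\<^bsub>GG\<^esub> b \<otimes>\<^bsub>GG\<^esub> x [^]\<^bsub>GG\<^esub> a"
proof -
  have "y \<otimes>\<^bsub>GG\<^esub> x [^]\<^bsub>GG\<^esub> a = x [^]\<^bsub>GG\<^esub> a \<otimes>\<^bsub>GG\<^esub> y"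
    using pow_comm1[OF x y c] by simp
  from pow_comm1[OF y _ this] x show ?thesis by simp
qed

lemma tau_comm: "tau1 \<otimes>\<^bsub>GG\<^esub> tau2 = tau2 \<otimes>\<^bsub>GG\<^esub> tau1"
  using cls_weq[OF ciii] by (simp add: tau1_def tau2_def mult_cls tau_words)

lemma T_mult: "T a b \<otimes>\<^bsub>GG\<^esub> T c d = T (a + c) (b + d)"
proof -
  have "T a b \<otimes>\<^bsub>GG\<^esub> T c d = tau1 [^]\<^bsub>GG\<^esub> a \<otimes>\<^bsub>GG\<^esub> (tau2 [^]\<^bsub>GG\<^esub> b \<otimes>\<^bsub>GG\<^esub> tau1 [^]\<^bsub>GG\<^esub> c) \<otimes>\<^bsub>GG\<^esub> tau2 [^]\<^bsub>GG\<^esub> d"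
    by (simp add: T_def G.m_assoc)
  also have "\<dots> = tau1 [^]\<^bsub>GG\<^esub> a \<otimes>\<^bsub>GG\<^esub> (tau1 [^]\<^bsub>GG\<^esub> c \<otimes>\<^bsub>GG\<^esub> tau2 [^]\<^bsub>GG\<^esub> b) \<otimes>\<^bsub>GG\<^esub> tau2 [^]\<^bsub>GG\<^esub> d"
    using pow_comm2[OF tau_carrier(2,1) tau_comm[symmetric]] by simp
  also have "\<dots> = T (a + c) (b + d)"
    by (simp add: T_def G.m_assoc G.int_pow_mult)
  finally show ?thesis .
qed

lemma T_pow: "T a b [^]\<^bsub>GG\<^esub> (k::int) = T (a * k) (b * k)"
proof -
  have c: "tau1 [^]\<^bsub>GG\<^esub> a \<otimes>\<^bsub>GG\<^esub> tau2 [^]\<^bsub>GG\<^esub> b = tau2 [^]\<^bsub>GG\<^esub> b \<otimes>\<^bsub>GG\<^esub> tau1 [^]\<^bsub>GG\<^esub> a"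
    using pow_comm2[OF tau_carrier tau_comm] by simp
  show ?thesis unfolding T_def
    using G.int_pow_mult_distrib[OF c] by (simp add: G.int_pow_pow)
qed

lemma conj_pow:
  assumes s: "s \<in> carrier GG" and ss: "s \<otimes>\<^bsub>GG\<^esub> s = \<one>\<^bsub>GG\<^esub>" and x: "x \<in> carrier GG"
  shows "s \<otimes>\<^bsub>GG\<^esub> x [^]\<^bsub>GG\<^esub> (k::int) \<otimes>\<^bsub>GG\<^esub> s = (s \<otimes>\<^bsub>GG\<^esub> x \<otimes>\<^bsub>GG\<^esub> s) [^]\<^bsub>GG\<^esub> k"
proof -
  define h where "h = (\<lambda>y. s \<otimes>\<^bsub>GG\<^esub> y \<otimes>\<^bsub>GG\<^esub> s)"
  have "h \<in> hom GG GG"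
  proof (rule homI)
    fix y assume "y \<in> carrier GG" then show "h y \<in> carrier GG" using s by (simp add: h_def)
  next
    fix y z assume y: "y \<in> carrier GG" and z: "z \<in> carrier GG"
    have "h y \<otimes>\<^bsub>GG\<^esub> h z = s \<otimes>\<^bsub>GG\<^esub> y \<otimes>\<^bsub>GG\<^esub> (s \<otimes>\<^bsub>GG\<^esub> s) \<otimes>\<^bsub>GG\<^esub> z \<otimes>\<^bsub>GG\<^esub> s"
      using s y z by (simp add: h_def G.m_assoc)
    also have "\<dots> = h (y \<otimes>\<^bsub>GG\<^esub> z)" using s y z ss by (simp add: h_def G.m_assoc)
    finally show "h (y \<otimes>\<^bsub>GG\<^esub> z) = h y \<otimes>\<^bsub>GG\<^esub> h z" by simp
  qed
  from hom_int_pow[OF this x group_G group_G] show ?thesis by (simp add: h_def)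
qed

lemma gs_tau: "s \<in> G2_gens \<Longrightarrow> gs s \<otimes>\<^bsub>GG\<^esub> tau1 \<otimes>\<^bsub>GG\<^esub> gs s = T (fst (mapp (fst (gen s)) (1,0))) (snd (mapp (fst (gen s)) (1,0)))"
        "s \<in> G2_gens \<Longrightarrow> gs s \<otimes>\<^bsub>GG\<^esub> tau2 \<otimes>\<^bsub>GG\<^esub> gs s = T (fst (mapp (fst (gen s)) (0,1))) (snd (mapp (fst (gen s)) (0,1)))"
proof -
  assume s: "s \<in> G2_gens"
  have sw: "[s] \<in> G2_words" using s by (simp add: G2_words_def)
  have r1: "G2_weq ([s] @ tau1w @ [s]) (Tw (fst (mapp (fst (gen s)) (1,0))) (snd (mapp (fst (gen s)) (1,0))))"
    "G2_weq ([s] @ tau2w @ [s]) (Tw (fst (mapp (fst (gen s)) (0,1))) (snd (mapp (fst (gen s)) (0,1))))"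
    using s unfolding G2_gens_def by (auto simp only: ci_all insert_iff empty_iff)
  show "gs s \<otimes>\<^bsub>GG\<^esub> tau1 \<otimes>\<^bsub>GG\<^esub> gs s = T (fst (mapp (fst (gen s)) (1,0))) (snd (mapp (fst (gen s)) (1,0)))"
    using cls_weq[OF r1(1)] s tau_words by (simp add: gs_def tau1_def mult_cls G2_words_def cls_Tw)
  show "gs s \<otimes>\<^bsub>GG\<^esub> tau2 \<otimes>\<^bsub>GG\<^esub> gs s = T (fst (mapp (fst (gen s)) (0,1))) (snd (mapp (fst (gen s)) (0,1)))"
    using cls_weq[OF r1(2)] s tau_words by (simp add: gs_def tau2_def mult_cls G2_words_def cls_Tw)
qed

lemma conj_T:
  assumes s: "s \<in> G2_gens"
  shows "gs s \<otimes>\<^bsub>GG\<^esub> T a b \<otimes>\<^bsub>GG\<^esub> gs s = T (fst (mapp (fst (gen s)) (a,b))) (snd (mapp (fst (gen s)) (a,b)))"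
proof -
  let ?g = "gs s"
  have g: "?g \<in> carrier GG" using s by simp
  have gg: "?g \<otimes>\<^bsub>GG\<^esub> ?g = \<one>\<^bsub>GG\<^esub>" using gs_sq[OF s] .
  have split: "?g \<otimes>\<^bsub>GG\<^esub> (X \<otimes>\<^bsub>GG\<^esub> Y) \<otimes>\<^bsub>GG\<^esub> ?g =
      (?g \<otimes>\<^bsub>GG\<^esub> X \<otimes>\<^bsub>GG\<^esub> ?g) \<otimes>\<^bsub>GG\<^esub> (?g \<otimes>\<^bsub>GG\<^esub> Y \<otimes>\<^bsub>GG\<^esub> ?g)"
    if X: "X \<in> carrier GG" and Y: "Y \<in> carrier GG" for X Y
  proof -
    have "(?g \<otimes>\<^bsub>GG\<^esub> X \<otimes>\<^bsub>GG\<^esub> ?g) \<otimes>\<^bsub>GG\<^esub> (?g \<otimes>\<^bsub>GG\<^esub> Y \<otimes>\<^bsub>GG\<^esub> ?g)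
       = ?g \<otimes>\<^bsub>GG\<^esub> X \<otimes>\<^bsub>GG\<^esub> (?g \<otimes>\<^bsub>GG\<^esub> ?g) \<otimes>\<^bsub>GG\<^esub> Y \<otimes>\<^bsub>GG\<^esub> ?g"
      using g X Y by (simp add: G.m_assoc)
    then show ?thesis using g X Y gg by (simp add: G.m_assoc)
  qed
  obtain l1 l2 l3 l4 where L: "fst (gen s) = (l1,l2,l3,l4)" by (metis prod_cases4)
  have "gs s \<otimes>\<^bsub>GG\<^esub> T a b \<otimes>\<^bsub>GG\<^esub> gs s =
     (?g \<otimes>\<^bsub>GG\<^esub> tau1 [^]\<^bsub>GG\<^esub> a \<otimes>\<^bsub>GG\<^esub> ?g) \<otimes>\<^bsub>GG\<^esub> (?g \<otimes>\<^bsub>GG\<^esub> tau2 [^]\<^bsub>GG\<^esub> b \<otimes>\<^bsub>GG\<^esub> ?g)"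
    unfolding T_def by (rule split) simp_all
  also have "\<dots> = (?g \<otimes>\<^bsub>GG\<^esub> tau1 \<otimes>\<^bsub>GG\<^esub> ?g) [^]\<^bsub>GG\<^esub> a \<otimes>\<^bsub>GG\<^esub> (?g \<otimes>\<^bsub>GG\<^esub> tau2 \<otimes>\<^bsub>GG\<^esub> ?g) [^]\<^bsub>GG\<^esub> b"
    using conj_pow[OF g gg] by simp
  also have "\<dots> = T l1 l3 [^]\<^bsub>GG\<^esub> a \<otimes>\<^bsub>GG\<^esub> T l2 l4 [^]\<^bsub>GG\<^esub> b"
    using gs_tau[OF s] L by simp
  also have "\<dots> = T (l1 * a + l2 * b) (l3 * a + l4 * b)"
    by (simp add: T_pow T_mult)
  finally show ?thesis using L by (simp add: mult.commute)
qed

lemma cii_gen: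
  assumes "s \<in> G2_gens" "M \<in> W12"
  shows "G2_weq ([s] @ wword M) (Tw (fst (snd (gen s))) (snd (snd (gen s))) @ wword (mmul (fst (gen s)) M))"
proof -
  have s: "s = 1 \<or> s = 2 \<or> s = 3" using assms(1) by (simp add: G2_gens_def)
  have m: "M = (1,0,0,1) \<or> M = (1,1,0,-1) \<or> M = (1,0,-1,-1) \<or> M = (1,1,-1,0) \<or> M = (0,-1,1,1) \<or>
     M = (0,1,1,0) \<or> M = (0,-1,-1,0) \<or> M = (0,1,-1,-1) \<or> M = (-1,-1,1,0) \<or> M = (-1,0,1,1) \<or>
     M = (-1,-1,0,1) \<or> M = (-1,0,0,-1)"
    using assms(2) by (simp add: W12_def Wl_def)
  from s m show ?thesis by (elim disjE) (simp_all only: cii_all)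
qed

lemma wword_words: "wword M \<in> G2_words"
proof (cases "map_of Wl M")
  case None then show ?thesis by (simp add: wword_def G2_words_def)
next
  case (Some w)
  then have "(M, w) \<in> set Wl" by (rule map_of_SomeD)
  then have "set w \<subseteq> G2_gens" by (auto simp: Wl_def G2_gens_def)
  then show ?thesis using Some by (simp add: wword_def G2_words_def)
qed

definition Wel :: "mat \<Rightarrow> nat list set" where "Wel M = G2_cls (wword M)"
definition Nf :: "aff \<Rightarrow> nat list set" where
  "Nf X = T (fst (snd X)) (snd (snd X)) \<otimes>\<^bsub>GG\<^esub> Wel (fst X)"

lemma Wel_carrier[simp]: "Wel M \<in> carrier GG"
  by (simp add: Wel_def cls_carrier wword_words)

lemma gs_W:
  assumes "s \<in> G2_gens" "M \<in> W12"
  shows "gs s \<otimes>\<^bsub>GG\<^esub> Wel M = T (fst (snd (gen s))) (snd (snd (gen s))) \<otimes>\<^bsub>GG\<^esub> Wel (mmul (fst (gen s)) M)"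
proof -
  have sw: "[s] \<in> G2_words" using assms by (simp add: G2_words_def)
  have tw: "Tw a b \<in> G2_words" for a b by (simp add: Tw_def pw_words tau_words words_app)
  have l: "gs s \<otimes>\<^bsub>GG\<^esub> Wel M = G2_cls ([s] @ wword M)"
    by (simp only: gs_def Wel_def mult_cls[OF sw wword_words])
  have r: "T (fst (snd (gen s))) (snd (snd (gen s))) \<otimes>\<^bsub>GG\<^esub> Wel (mmul (fst (gen s)) M)
     = G2_cls (Tw (fst (snd (gen s))) (snd (snd (gen s))) @ wword (mmul (fst (gen s)) M))"
    by (simp only: cls_Tw[symmetric] Wel_def mult_cls[OF tw wword_words])
  show ?thesis unfolding l r by (rule cls_weq[OF cii_gen[OF assms]])
qed

lemma gen_N:
  assumes s: "s \<in> G2_gens" and M: "M \<in> W12"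
  shows "gs s \<otimes>\<^bsub>GG\<^esub> Nf (M,(e,f)) = Nf (amul (gen s) (M,(e,f)))"
proof -
  let ?g = "gs s"
  have g: "?g \<in> carrier GG" using s by simp
  obtain Ls t1 t2 where gen: "gen s = (Ls,(t1,t2))" by (metis prod.exhaust)
  obtain p q where pq: "mapp Ls (e,f) = (p,q)" by (metis prod.exhaust)
  have "(?g \<otimes>\<^bsub>GG\<^esub> T e f \<otimes>\<^bsub>GG\<^esub> ?g) \<otimes>\<^bsub>GG\<^esub> (?g \<otimes>\<^bsub>GG\<^esub> Wel M)
      = ?g \<otimes>\<^bsub>GG\<^esub> T e f \<otimes>\<^bsub>GG\<^esub> (?g \<otimes>\<^bsub>GG\<^esub> ?g) \<otimes>\<^bsub>GG\<^esub> Wel M"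
    using g by (simp add: G.m_assoc)
  also have "\<dots> = ?g \<otimes>\<^bsub>GG\<^esub> Nf (M,(e,f))"
    using g gs_sq[OF s] by (simp add: Nf_def G.m_assoc)
  finally have "?g \<otimes>\<^bsub>GG\<^esub> Nf (M,(e,f)) = (?g \<otimes>\<^bsub>GG\<^esub> T e f \<otimes>\<^bsub>GG\<^esub> ?g) \<otimes>\<^bsub>GG\<^esub> (?g \<otimes>\<^bsub>GG\<^esub> Wel M)"
    by simp
  also have "\<dots> = T p q \<otimes>\<^bsub>GG\<^esub> (T t1 t2 \<otimes>\<^bsub>GG\<^esub> Wel (mmul Ls M))"
    using conj_T[OF s, of e f] gs_W[OF s M] gen pq by simp
  also have "\<dots> = T (p + t1) (q + t2) \<otimes>\<^bsub>GG\<^esub> Wel (mmul Ls M)"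
    by (simp add: G.m_assoc[symmetric] T_mult)
  also have "\<dots> = Nf (amul (gen s) (M,(e,f)))"
    using gen pq by (simp add: Nf_def)
  finally show ?thesis .
qed

lemma W12_closed: "s \<in> G2_gens \<Longrightarrow> M \<in> W12 \<Longrightarrow> mmul (fst (gen s)) M \<in> W12"
  by (auto simp: G2_gens_def W12_def Wl_def gen_def)

lemma fst_amul: "fst (amul X Y) = mmul (fst X) (fst Y)"
  by (cases X; cases Y) simp

lemma ev_W12: "set w \<subseteq> G2_gens \<Longrightarrow> fst (ev w) \<in> W12"
proof (induction w)
  case Nil then show ?case by (simp add: aid_def Imat_def W12_def Wl_def)
next
  case (Cons i w) then show ?case by (simp add: fst_amul W12_closed)
qed

lemma cls_N: "w \<in> G2_words \<Longrightarrow> G2_cls w = Nf (ev w)"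
proof (induction w)
  case Nil
  have "wword Imat = []" by (simp add: wword_def Wl_def Imat_def)
  then show ?case by (simp add: Nf_def aid_def T_def Wel_def one_G[symmetric])
next
  case (Cons i w)
  have i: "i \<in> G2_gens" and w: "w \<in> G2_words" using Cons.prems by (auto simp: G2_words_def)
  obtain M e f where ev: "ev w = (M,(e,f))" by (metis prod.exhaust)
  have M: "M \<in> W12" using ev_W12[of w] w ev by (simp add: G2_words_def)
  have "G2_cls (i # w) = gs i \<otimes>\<^bsub>GG\<^esub> G2_cls w"
    using mult_cls[of "[i]" w] i w by (simp add: gs_def G2_words_def)
  also have "\<dots> = gs i \<otimes>\<^bsub>GG\<^esub> Nf (M,(e,f))" using Cons.IH[OF w] ev by simp
  also have "\<dots> = Nf (ev (i # w))" using gen_N[OF i M] ev by simp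
  finally show ?case .
qed

lemma carrier_Nf: "x \<in> carrier GG \<Longrightarrow> x = Nf (Phi x)"
proof -
  assume "x \<in> carrier GG"
  then obtain u where u: "u \<in> G2_words" "x = G2_cls u" by (auto simp: carrier_G)
  then show ?thesis using Phi_cls[OF u(1)] cls_N[OF u(1)] by simp
qed

lemma Phi_inj: "x \<in> carrier GG \<Longrightarrow> y \<in> carrier GG \<Longrightarrow> Phi x = Phi y \<Longrightarrow> x = y"
  by (metis carrier_Nf)

lemma Phi_W12: "x \<in> carrier GG \<Longrightarrow> fst (Phi x) \<in> W12"
  by (auto simp: carrier_G Phi_cls ev_W12 G2_words_def)

lemma Phi_tau: "Phi tau1 = (Imat,(1,0))" "Phi tau2 = (Imat,(0,1))"
  unfolding tau1_def tau2_def using tau_words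
  by (simp_all only: Phi_cls) (simp_all add: tau1w_def tau2w_def gen_def Imat_def aid_def)

definition winv :: "mat \<Rightarrow> mat" where
  "winv M = (case M of (a,b,c,d) \<Rightarrow> let dt = a*d - b*c in (dt*d, -dt*b, -dt*c, dt*a))"

definition cc :: "mat \<Rightarrow> nat" where
  "cc M = (if M = (1,0,0,1) then 0
    else if M = (-1,0,1,1) \<or> M = (0,-1,-1,0) \<or> M = (1,1,0,-1) then 1
    else if M = (-1,-1,0,1) \<or> M = (0,1,1,0) \<or> M = (1,0,-1,-1) then 2
    else if M = (0,-1,1,1) \<or> M = (1,1,-1,0) then 3
    else if M = (-1,-1,1,0) \<or> M = (0,1,-1,-1) then 4 else 5)"

lemma W12_cases: "M \<in> W12 \<Longrightarrow> M = (1,0,0,1) \<or> M = (1,1,0,-1) \<or> M = (1,0,-1,-1) \<or> M = (1,1,-1,0) \<or> M = (0,-1,1,1) \<or>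
     M = (0,1,1,0) \<or> M = (0,-1,-1,0) \<or> M = (0,1,-1,-1) \<or> M = (-1,-1,1,0) \<or> M = (-1,0,1,1) \<or>
     M = (-1,-1,0,1) \<or> M = (-1,0,0,-1)"
  by (simp add: W12_def Wl_def)

lemma winv_r: "P \<in> W12 \<Longrightarrow> mmul P (winv P) = Imat"
  by (drule W12_cases) (elim disjE; simp add: winv_def Imat_def)

lemma conj_cc: "P \<in> W12 \<Longrightarrow> X \<in> W12 \<Longrightarrow> cc (mmul (mmul P X) (winv P)) = cc X"
  apply (drule W12_cases)+
  apply (elim disjE)
  apply (simp_all add: winv_def cc_def)
  done

lemma fin_comm: "A \<in> W12 \<Longrightarrow> B \<in> W12 \<Longrightarrow> mmul A A = Imat \<Longrightarrow> mmul B B = Imat \<Longrightarrow> mmul A B = mmul B A \<Longrightarrow> cc A = cc B \<Longrightarrow> A \<noteq> Imat \<Longrightarrow> A = B"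
  apply (drule W12_cases)+
  apply (elim disjE)
  apply (simp_all add: cc_def Imat_def)
  done

lemma mmul_I[simp]: "mmul Imat X = X" "mmul X Imat = X"
  by (cases X rule: prod_cases4; simp add: Imat_def)+

lemma left_inv_W12: "P \<in> W12 \<Longrightarrow> mmul Q P = Imat \<Longrightarrow> Q = winv P"
proof -
  assume P: "P \<in> W12" and q: "mmul Q P = Imat"
  have "Q = mmul Q (mmul P (winv P))" using winv_r[OF P] by simp
  also have "\<dots> = winv P" using q by (simp add: mmul_assoc[symmetric])
  finally show ?thesis .
qed

lemma aff_inv_lin: "amul A A = aid \<Longrightarrow> fst A = Imat \<Longrightarrow> A = aid"
  by (cases A rule: aff_cases) (simp add: aid_def Imat_def)

lemma aff_comm: "fst A = fst B \<Longrightarrow> amul A A = aid \<Longrightarrow> amul B B = aid \<Longrightarrow> amul A B = amul B A \<Longrightarrow> A = B"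
  by (cases A rule: aff_cases; cases B rule: aff_cases) (simp add: aid_def Imat_def; linarith)

lemma aff_transl: "amul C (Imat,(e1,e2)) = aid \<Longrightarrow> C = (Imat,(-e1,-e2))"
  by (cases C rule: aff_cases) (simp add: aid_def Imat_def)

lemma conj_sq:
  assumes g: "g \<in> carrier GG" and x: "x \<in> carrier GG"
  shows "(g \<otimes>\<^bsub>GG\<^esub> x \<otimes>\<^bsub>GG\<^esub> inv\<^bsub>GG\<^esub> g) \<otimes>\<^bsub>GG\<^esub> (g \<otimes>\<^bsub>GG\<^esub> x \<otimes>\<^bsub>GG\<^esub> inv\<^bsub>GG\<^esub> g)
     = g \<otimes>\<^bsub>GG\<^esub> (x \<otimes>\<^bsub>GG\<^esub> x) \<otimes>\<^bsub>GG\<^esub> inv\<^bsub>GG\<^esub> g"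
proof -
  have "(g \<otimes>\<^bsub>GG\<^esub> x \<otimes>\<^bsub>GG\<^esub> inv\<^bsub>GG\<^esub> g) \<otimes>\<^bsub>GG\<^esub> (g \<otimes>\<^bsub>GG\<^esub> x \<otimes>\<^bsub>GG\<^esub> inv\<^bsub>GG\<^esub> g)
     = g \<otimes>\<^bsub>GG\<^esub> x \<otimes>\<^bsub>GG\<^esub> (inv\<^bsub>GG\<^esub> g \<otimes>\<^bsub>GG\<^esub> g) \<otimes>\<^bsub>GG\<^esub> x \<otimes>\<^bsub>GG\<^esub> inv\<^bsub>GG\<^esub> g"
    using g x by (simp only: G.m_assoc G.m_closed G.inv_closed)
  also have "\<dots> = g \<otimes>\<^bsub>GG\<^esub> x \<otimes>\<^bsub>GG\<^esub> x \<otimes>\<^bsub>GG\<^esub> inv\<^bsub>GG\<^esub> g"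
    using g x by (simp only: G.l_inv G.r_one G.m_closed)
  finally show ?thesis using g x by (simp add: G.m_assoc)
qed

lemma conj_one:
  assumes g: "g \<in> carrier GG" and x: "x \<in> carrier GG"
    and e: "g \<otimes>\<^bsub>GG\<^esub> x \<otimes>\<^bsub>GG\<^esub> inv\<^bsub>GG\<^esub> g = \<one>\<^bsub>GG\<^esub>"
  shows "x = \<one>\<^bsub>GG\<^esub>"
proof -
  have "g \<otimes>\<^bsub>GG\<^esub> x = g" using e g x
    by (metis G.inv_closed G.l_inv G.m_assoc G.m_closed G.r_one G.inv_equality G.inv_inv)
  then show ?thesis using g x by simp
qed

lemma Phi_inv_lin: "g \<in> carrier GG \<Longrightarrow> fst (Phi (inv\<^bsub>GG\<^esub> g)) = winv (fst (Phi g))"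
proof -
  assume g: "g \<in> carrier GG"
  have ai: "amul (Phi (inv\<^bsub>GG\<^esub> g)) (Phi g) = aid"
    using Phi_mult[of "inv\<^bsub>GG\<^esub> g" g] g by (simp add: Phi_one)
  have "mmul (fst (Phi (inv\<^bsub>GG\<^esub> g))) (fst (Phi g)) = Imat"
    using arg_cong[OF ai, of fst] by (simp add: fst_amul aid_def)
  then show ?thesis using left_inv_W12 Phi_W12 g by blast
qed

lemma conj_Phi_lin:
  assumes g: "g \<in> carrier GG" and x: "x \<in> carrier GG"
  shows "cc (fst (Phi (g \<otimes>\<^bsub>GG\<^esub> x \<otimes>\<^bsub>GG\<^esub> inv\<^bsub>GG\<^esub> g))) = cc (fst (Phi x))"
proof -
  have "fst (Phi (g \<otimes>\<^bsub>GG\<^esub> x \<otimes>\<^bsub>GG\<^esub> inv\<^bsub>GG\<^esub> g)) = mmul (mmul (fst (Phi g)) (fst (Phi x))) (winv (fst (Phi g)))"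
    using g x by (simp add: Phi_mult fst_amul Phi_inv_lin)
  then show ?thesis using conj_cc Phi_W12 g x by simp
qed

lemma invol_lin:
  assumes a: "a \<in> carrier GG" "a \<noteq> \<one>\<^bsub>GG\<^esub>" "a \<otimes>\<^bsub>GG\<^esub> a = \<one>\<^bsub>GG\<^esub>"
  shows "amul (Phi a) (Phi a) = aid" "fst (Phi a) \<noteq> Imat"
proof -
  show aa: "amul (Phi a) (Phi a) = aid" using a Phi_mult[of a a] by (simp add: Phi_one)
  show "fst (Phi a) \<noteq> Imat"
  proof
    assume "fst (Phi a) = Imat"
    then have "Phi a = Phi \<one>\<^bsub>GG\<^esub>" using aff_inv_lin[OF aa] by (simp add: Phi_one)
    then have "a = \<one>\<^bsub>GG\<^esub>" using Phi_inj a by simp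
    then show False using a by simp
  qed
qed

lemma no_edge:
  assumes t: "involution GG t"
  shows "\<not> cig_edge GG (conj_class GG t) a b"
proof
  assume e: "cig_edge GG (conj_class GG t) a b"
  have t': "t \<in> carrier GG" "t \<noteq> \<one>\<^bsub>GG\<^esub>" "t \<otimes>\<^bsub>GG\<^esub> t = \<one>\<^bsub>GG\<^esub>"
    using t by (auto simp: involution_def)
  have facts: "x \<in> carrier GG \<and> x \<noteq> \<one>\<^bsub>GG\<^esub> \<and> x \<otimes>\<^bsub>GG\<^esub> x = \<one>\<^bsub>GG\<^esub> \<and> cc (fst (Phi x)) = cc (fst (Phi t))"
    if "x \<in> conj_class GG t" for x
  proof -
    have "\<exists>g. x = g \<otimes>\<^bsub>GG\<^esub> t \<otimes>\<^bsub>GG\<^esub> inv\<^bsub>GG\<^esub> g \<and> g \<in> carrier GG"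
      using that by (simp add: conj_class_def)
    then obtain g where g: "g \<in> carrier GG" and xg: "x = g \<otimes>\<^bsub>GG\<^esub> t \<otimes>\<^bsub>GG\<^esub> inv\<^bsub>GG\<^esub> g"
      by blast
    have "x \<in> carrier GG" using g t' xg by simp
    moreover have "x \<noteq> \<one>\<^bsub>GG\<^esub>" using conj_one[OF g t'(1)] xg t' by blast
    moreover have "x \<otimes>\<^bsub>GG\<^esub> x = \<one>\<^bsub>GG\<^esub>" using conj_sq[OF g t'(1)] xg t' g by simp
    moreover have "cc (fst (Phi x)) = cc (fst (Phi t))" using conj_Phi_lin[OF g t'(1)] xg by simp
    ultimately show ?thesis by blast
  qed
  have ab: "a \<in> conj_class GG t" "b \<in> conj_class GG t" "a \<noteq> b" "a \<otimes>\<^bsub>GG\<^esub> b = b \<otimes>\<^bsub>GG\<^esub> a"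
    using e by (auto simp: cig_edge_def)
  note fa = facts[OF ab(1)] and fb = facts[OF ab(2)]
  have AA: "amul (Phi a) (Phi a) = aid" "fst (Phi a) \<noteq> Imat" using invol_lin[of a] fa by auto
  have BB: "amul (Phi b) (Phi b) = aid" "fst (Phi b) \<noteq> Imat" using invol_lin[of b] fb by auto
  have AB: "amul (Phi a) (Phi b) = amul (Phi b) (Phi a)"
    using Phi_mult[of a b] Phi_mult[of b a] fa fb ab(4) by simp
  have "fst (Phi a) = fst (Phi b)"
  proof (rule fin_comm)
    show "fst (Phi a) \<in> W12" "fst (Phi b) \<in> W12" using Phi_W12[of a] Phi_W12[of b] fa fb by auto
    show "mmul (fst (Phi a)) (fst (Phi a)) = Imat" using arg_cong[OF AA(1), of fst] by (simp add: fst_amul aid_def)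
    show "mmul (fst (Phi b)) (fst (Phi b)) = Imat" using arg_cong[OF BB(1), of fst] by (simp add: fst_amul aid_def)
    show "mmul (fst (Phi a)) (fst (Phi b)) = mmul (fst (Phi b)) (fst (Phi a))" using arg_cong[OF AB, of fst] by (simp add: fst_amul)
    show "cc (fst (Phi a)) = cc (fst (Phi b))" using fa fb by simp
    show "fst (Phi a) \<noteq> Imat" by (rule AA(2))
  qed
  then have "Phi a = Phi b" by (rule aff_comm[OF _ AA(1) BB(1) AB])
  then have "a = b" using Phi_inj[of a b] fa fb by simp
  then show False using ab(3) by simp
qed

lemma other_conj:
  assumes t: "involution GG t"
  shows "\<exists>t'\<in>conj_class GG t. t' \<noteq> t"
proof -
  have t': "t \<in> carrier GG" "t \<noteq> \<one>\<^bsub>GG\<^esub>" "t \<otimes>\<^bsub>GG\<^esub> t = \<one>\<^bsub>GG\<^esub>"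
    using t by (auto simp: involution_def)
  have lin_ne: "fst (Phi t) \<noteq> Imat" using invol_lin t' by blast
  obtain m1 m2 m3 m4 u1 u2 where Pt: "Phi t = ((m1,m2,m3,m4),(u1,u2))" by (rule aff_cases)
  have key: "Phi (tau \<otimes>\<^bsub>GG\<^esub> t \<otimes>\<^bsub>GG\<^esub> inv\<^bsub>GG\<^esub> tau) \<noteq> Phi t"
    if tau: "tau \<in> carrier GG" and pt: "Phi tau = (Imat,(e1,e2))" and ne: "mapp (m1,m2,m3,m4) (e1,e2) \<noteq> (e1,e2)"
    for tau e1 e2
  proof -
    have "amul (Phi (inv\<^bsub>GG\<^esub> tau)) (Imat,(e1,e2)) = aid"
      using Phi_mult[of "inv\<^bsub>GG\<^esub> tau" tau] tau pt by (simp add: Phi_one)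
    then have pi: "Phi (inv\<^bsub>GG\<^esub> tau) = (Imat,(-e1,-e2))" by (rule aff_transl)
    have "Phi (tau \<otimes>\<^bsub>GG\<^esub> t \<otimes>\<^bsub>GG\<^esub> inv\<^bsub>GG\<^esub> tau) = amul (amul (Imat,(e1,e2)) (Phi t)) (Imat,(-e1,-e2))"
      using tau t' pt pi by (simp add: Phi_mult)
    then show ?thesis using ne Pt by (simp add: Imat_def algebra_simps; linarith)
  qed
  have "\<exists>tau\<in>carrier GG. Phi (tau \<otimes>\<^bsub>GG\<^esub> t \<otimes>\<^bsub>GG\<^esub> inv\<^bsub>GG\<^esub> tau) \<noteq> Phi t"
  proof (cases "(m1,m3) = (1,0)")
    case True
    then have "(m2,m4) \<noteq> (0,1)" using lin_ne Pt by (auto simp: Imat_def)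
    then have "mapp (m1,m2,m3,m4) (0,1) \<noteq> (0,1)" by simp
    from key[OF tau_carrier(2) Phi_tau(2) this] tau_carrier(2) show ?thesis by (rule bexI)
  next
    case False
    then have "mapp (m1,m2,m3,m4) (1,0) \<noteq> (1,0)" by simp
    from key[OF tau_carrier(1) Phi_tau(1) this] tau_carrier(1) show ?thesis by (rule bexI)
  qed
  then obtain tau where tau: "tau \<in> carrier GG" and ne: "Phi (tau \<otimes>\<^bsub>GG\<^esub> t \<otimes>\<^bsub>GG\<^esub> inv\<^bsub>GG\<^esub> tau) \<noteq> Phi t"
    by blast
  have m: "tau \<otimes>\<^bsub>GG\<^esub> t \<otimes>\<^bsub>GG\<^esub> inv\<^bsub>GG\<^esub> tau \<in> conj_class GG t"
    unfolding conj_class_def mem_Collect_eq by (intro exI[where x=tau] conjI) (simp_all add: tau)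
  have "tau \<otimes>\<^bsub>GG\<^esub> t \<otimes>\<^bsub>GG\<^esub> inv\<^bsub>GG\<^esub> tau \<noteq> t"
  proof
    assume "tau \<otimes>\<^bsub>GG\<^esub> t \<otimes>\<^bsub>GG\<^esub> inv\<^bsub>GG\<^esub> tau = t"
    then show False using ne by simp
  qed
  with m show ?thesis by (rule bexI[rotated])
qed

theorem proposition3p2:
  assumes "involution affine_G2 t"
  shows "\<not> cig_connected affine_G2 (conj_class affine_G2 t)"
proof
  assume conn: "cig_connected affine_G2 (conj_class affine_G2 t)"
  have tc: "t \<in> carrier GG" using assms by (simp add: involution_def)
  have tin: "t \<in> conj_class GG t"
    unfolding conj_class_def mem_Collect_eq by (intro exI[where x="\<one>\<^bsub>GG\<^esub>"] conjI) (simp_all add: tc)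
  obtain t' where t': "t' \<in> conj_class GG t" "t' \<noteq> t" using other_conj[OF assms] by (elim bexE)
  have "(cig_edge GG (conj_class GG t))\<^sup>*\<^sup>* t t'" using conn tin t'(1) by (simp add: cig_connected_def)
  then have "t = t'"
  proof (cases rule: rtranclp.cases)
    case rtrancl_refl then show ?thesis by simp
  next
    case (rtrancl_into_rtrancl c)
    then show ?thesis using no_edge[OF assms, of c t'] by simp
  qed
  then show False using t'(2) by simp
qed

end
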